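(* Let $I$ be a countable set with $|I|\ge2$, let $\mathfrak{M}_i=(S_i,\mathcal{L}_i)$, $i\in I$, be partial linear spaces all of whose lines have at least $4$ points, let $\mathfrak{M}=\bigotimes_{i\in I}\mathfrak{M}_i$ with point set $S$, and let $\mathcal{H}$ be a non-degenerate hyperplane of $\mathfrak{M}$. Let $L_1,L_2$ be distinct lines of $\mathfrak{M}$, neither contained in $\mathcal{H}$, passing through a common point of $\mathcal{H}$, and suppose there are no $b\in S$, $i\in I$ with $L_1,L_2\subseteq b[i/S_i]$. Then, in the complement $\mathfrak{M}\setminus\mathcal{H}$, $(L_1\setminus\mathcal{H})\equiv(L_2\setminus\mathcal{H})$.
   Context: A partial linear space is a pair $(S,\mathcal{L})$ of points and lines such that every line has at least two points, every point lies on a line, two distinct lines share at most one point. A subspace is a set such that any line meeting it in at least two points lies in it; a hyperplane is a proper subspace meeting every line. Segre product: points $S=\prod_i S_i$; $a[i/x]$ is $a$ with $i$-th coordinate replaced by $x$, $a[i/A]=\{a[i/x]:x\in A\}$; lines are $a[i/l]$, $l\in\mathcal{L}_i$. $\mathcal{H}^{[a]}_i=\{x\in S_i:a[i/x]\in\mathcal{H}\}$; $\mathcal{H}$ is non-degenerate if every $\mathcal{H}^{[a]}_i$ is a hyperplane of $\mathfrak{M}_i$. The complement $\mathfrak{M}\setminus\mathcal{H}$ has points $S\setminus\mathcal{H}$ and lines $L\setminus\mathcal{H}$ for lines $L\not\subseteq\mathcal{H}$; in it, points are adjacent if they lie on a common line of the complement, and lines are adjacent if they share a point of the complement. A quadrangle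 without diagonals in the complement is a quadruple $p,q,r,s$ of pairwise distinct points with $p\sim q$, $q\sim r$, $r\sim s$, $s\sim p$, $p\not\sim r$, $q\not\sim s$. For lines $K_1,K_2$ of the complement, $K_1\parallel^\star K_2$ iff there is a quadrangle without diagonals $p,q,r,s$ with $K_1$ the line through $p,q$ and $K_2$ the line through $r,s$. For lines $L_1,L_2$ of the complement, $L_1\equiv L_2$ iff there are lines $K_1,K_2,M_1,M_2$ of the complement with $K_1\parallel^\star K_2$, each of $M_1,M_2,L_1$ adjacent to both $K_1$ and $K_2$, $L_2$ adjacent to both $M_1$ and $M_2$, and $L_1,L_2$ not adjacent. *)

theory Defs
  imports "HOL-Library.FuncSet" "HOL-Library.Countable_Set"
begin

definition partial_linear_space :: "'a set \<Rightarrow> 'a set set \<Rightarrow> bool" where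
  "partial_linear_space P Ls \<longleftrightarrow>
     (\<forall>l\<in>Ls. l \<subseteq> P \<and> (\<exists>x y. x \<noteq> y \<and> x \<in> l \<and> y \<in> l)) \<and>
     (\<forall>p\<in>P. \<exists>l\<in>Ls. p \<in> l) \<and>
     (\<forall>l1\<in>Ls. \<forall>l2\<in>Ls. \<forall>x y. l1 \<noteq> l2 \<and> x \<in> l1 \<inter> l2 \<and> y \<in> l1 \<inter> l2 \<longrightarrow> x = y)"

definition lines_at_least_4 :: "'a set set \<Rightarrow> bool" where
  "lines_at_least_4 Ls \<longleftrightarrow> (\<forall>l\<in>Ls. infinite l \<or> card l \<ge> 4)"

definition subspace :: "'a set \<Rightarrow> 'a set set \<Rightarrow> 'a set \<Rightarrow> bool" where
  "subspace P Ls X \<longleftrightarrow> X \<subseteq> P \<and>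
     (\<forall>l\<in>Ls. (\<exists>x y. x \<noteq> y \<and> x \<in> l \<inter> X \<and> y \<in> l \<inter> X) \<longrightarrow> l \<subseteq> X)"

definition hyperplane :: "'a set \<Rightarrow> 'a set set \<Rightarrow> 'a set \<Rightarrow> bool" where
  "hyperplane P Ls X \<longleftrightarrow> subspace P Ls X \<and> X \<noteq> P \<and> (\<forall>l\<in>Ls. l \<inter> X \<noteq> {})"

text \<open>Segre product of the family (S i, L i), i \<in> I. Points are the extensional
  functions in PiE I S; a[i/x] is a(i := x).\<close>

definition seg_points :: "'i set \<Rightarrow> ('i \<Rightarrow> 'a set) \<Rightarrow> ('i \<Rightarrow> 'a) set" where
  "seg_points I S = PiE I S"

definition subst_set :: "('i \<Rightarrow> 'a) \<Rightarrow> 'i \<Rightarrow> 'a set \<Rightarrow> ('i \<Rightarrow> 'a) set" where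
  "subst_set a i A = (\<lambda>x. a(i := x)) ` A"

definition seg_lines :: "'i set \<Rightarrow> ('i \<Rightarrow> 'a set) \<Rightarrow> ('i \<Rightarrow> 'a set set) \<Rightarrow> ('i \<Rightarrow> 'a) set set" where
  "seg_lines I S L = {subst_set a i l | a i l. a \<in> seg_points I S \<and> i \<in> I \<and> l \<in> L i}"

definition section_at :: "('i \<Rightarrow> 'a) set \<Rightarrow> ('i \<Rightarrow> 'a set) \<Rightarrow> ('i \<Rightarrow> 'a) \<Rightarrow> 'i \<Rightarrow> 'a set" where
  "section_at H S a i = {x \<in> S i. a(i := x) \<in> H}"

definition non_degenerate :: "'i set \<Rightarrow> ('i \<Rightarrow> 'a set) \<Rightarrow> ('i \<Rightarrow> 'a set set) \<Rightarrow> ('i \<Rightarrow> 'a) set \<Rightarrow> bool" where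
  "non_degenerate I S L H \<longleftrightarrow>
     (\<forall>a\<in>seg_points I S. \<forall>i\<in>I. hyperplane (S i) (L i) (section_at H S a i))"

definition compl_lines :: "'a set set \<Rightarrow> 'a set \<Rightarrow> 'a set set" where
  "compl_lines Ls H = {l - H | l. l \<in> Ls \<and> \<not> l \<subseteq> H}"

definition pt_adj :: "'a set set \<Rightarrow> 'a \<Rightarrow> 'a \<Rightarrow> bool" where
  "pt_adj CL p q \<longleftrightarrow> (\<exists>K\<in>CL. p \<in> K \<and> q \<in> K)"

definition ln_adj :: "'a set \<Rightarrow> 'a set \<Rightarrow> bool" where
  "ln_adj K1 K2 \<longleftrightarrow> K1 \<inter> K2 \<noteq> {}"

definition par_star :: "'a set set \<Rightarrow> 'a set \<Rightarrow> 'a set \<Rightarrow> bool" where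
  "par_star CL K1 K2 \<longleftrightarrow> K1 \<in> CL \<and> K2 \<in> CL \<and>
     (\<exists>p q r s. distinct [p, q, r, s] \<and>
        pt_adj CL p q \<and> pt_adj CL q r \<and> pt_adj CL r s \<and> pt_adj CL s p \<and>
        \<not> pt_adj CL p r \<and> \<not> pt_adj CL q s \<and>
        p \<in> K1 \<and> q \<in> K1 \<and> r \<in> K2 \<and> s \<in> K2)"

definition line_equiv :: "'a set set \<Rightarrow> 'a set \<Rightarrow> 'a set \<Rightarrow> bool" where
  "line_equiv CL L1 L2 \<longleftrightarrow> L1 \<in> CL \<and> L2 \<in> CL \<and>
     (\<exists>K1\<in>CL. \<exists>K2\<in>CL. \<exists>M1\<in>CL. \<exists>M2\<in>CL.
        par_star CL K1 K2 \<and>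
        ln_adj M1 K1 \<and> ln_adj M1 K2 \<and> ln_adj M2 K1 \<and> ln_adj M2 K2 \<and>
        ln_adj L1 K1 \<and> ln_adj L1 K2 \<and>
        ln_adj L2 M1 \<and> ln_adj L2 M2 \<and> \<not> ln_adj L1 L2)"

end

theory Submission
  imports Defs
begin

lemma upd_PiE: "a \<in> PiE I S \<Longrightarrow> i \<in> I \<Longrightarrow> x \<in> S i \<Longrightarrow> a(i := x) \<in> PiE I S"
  by (auto simp: PiE_iff extensional_def)

lemma seg_line_mem: "z \<in> subst_set b k m \<Longrightarrow> \<exists>u. z = b(k := u)"
  by (auto simp: subst_set_def)

lemma two_more:
  assumes "infinite l \<or> card l \<ge> 4"
  shows "\<exists>x1 x2. x1 \<in> l \<and> x2 \<in> l \<and> x1 \<noteq> x2 \<and> x1 \<notin> {a, b} \<and> x2 \<notin> {a, b}"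
proof -
  have ne: "\<not> l \<subseteq> {a, b, c}" for c
  proof
    assume h: "l \<subseteq> {a, b, c}"
    hence f: "finite l" using finite_subset by blast
    have "card l \<le> card {a, b, c}" using h by (simp add: card_mono)
    also have "\<dots> \<le> 3" by (simp add: card_insert_le_m1)
    finally show False using assms f by simp
  qed
  obtain x1 where x1: "x1 \<in> l" "x1 \<notin> {a, b}" using ne[of a] by blast
  obtain x2 where x2: "x2 \<in> l" "x2 \<notin> {a, b, x1}" using ne[of x1] by blast
  show ?thesis using x1 x2 by blast
qed

theorem lemma3p14:
  fixes I :: "'i set" and S :: "'i \<Rightarrow> 'a set" and L :: "'i \<Rightarrow> 'a set set"
    and H :: "('i \<Rightarrow> 'a) set" and L1 L2 :: "('i \<Rightarrow> 'a) set"
  assumes "countable I"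
    and "\<exists>i\<in>I. \<exists>j\<in>I. i \<noteq> j"
    and "\<forall>i\<in>I. partial_linear_space (S i) (L i) \<and> lines_at_least_4 (L i)"
    and "hyperplane (seg_points I S) (seg_lines I S L) H"
    and "non_degenerate I S L H"
    and "L1 \<in> seg_lines I S L" and "L2 \<in> seg_lines I S L" and "L1 \<noteq> L2"
    and "\<not> L1 \<subseteq> H" and "\<not> L2 \<subseteq> H"
    and "L1 \<inter> L2 \<inter> H \<noteq> {}"
    and "\<not> (\<exists>b\<in>seg_points I S. \<exists>i\<in>I. L1 \<subseteq> subst_set b i (S i) \<and> L2 \<subseteq> subst_set b i (S i))"
  shows "line_equiv (compl_lines (seg_lines I S L) H) (L1 - H) (L2 - H)"
proof -
  note pls = assms(3)
  have sub: "subspace (seg_points I S) (seg_lines I S L) H"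
    using assms(4) by (simp add: hyperplane_def)
  obtain p where pH: "p \<in> L1" "p \<in> L2" "p \<in> H" using assms(11) by blast
  obtain a i l1 where L1d: "L1 = subst_set a i l1" "a \<in> PiE I S" "i \<in> I" "l1 \<in> L i"
    using assms(6) by (auto simp: seg_lines_def seg_points_def)
  obtain c j l2 where L2d: "L2 = subst_set c j l2" "c \<in> PiE I S" "j \<in> I" "l2 \<in> L j"
    using assms(7) by (auto simp: seg_lines_def seg_points_def)
  have l1S: "l1 \<subseteq> S i" using pls L1d by (auto simp: partial_linear_space_def)
  have l2S: "l2 \<subseteq> S j" using pls L2d by (auto simp: partial_linear_space_def)
  obtain x0 where x0: "x0 \<in> l1" "p = a(i := x0)" using pH L1d by (auto simp: subst_set_def)
  obtain y0 where y0: "y0 \<in> l2" "p = c(j := y0)" using pH L2d by (auto simp: subst_set_def)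
  have pP: "p \<in> PiE I S" using upd_PiE[OF L1d(2,3)] x0 l1S by auto
  have L1p: "L1 = subst_set p i l1" using L1d x0 by (simp add: subst_set_def)
  have L2p: "L2 = subst_set p j l2" using L2d y0 by (simp add: subst_set_def)
  have px0: "p i = x0" using x0 by simp
  have py0: "p j = y0" using y0 by simp
  have ij: "i \<noteq> j"
  proof
    assume "i = j"
    hence "L1 \<subseteq> subst_set p i (S i) \<and> L2 \<subseteq> subst_set p i (S i)"
      using L1p L2p l1S l2S by (auto simp: subst_set_def)
    thus False using assms(12) pP L1d(3) by (auto simp: seg_points_def)
  qed
  define P where "P x y = p(i := x, j := y)" for x y
  have Pinj: "P x y = P x' y' \<Longrightarrow> x = x' \<and> y = y'" for x y x' y'
    unfolding P_def using ij by (metis fun_upd_same fun_upd_other)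
  have Pp: "P x0 y0 = p" unfolding P_def using px0 py0 by (metis fun_upd_triv)
  define row where "row y = subst_set (p(j := y)) i l1" for y
  define col where "col x = subst_set (p(i := x)) j l2" for x
  have row_seg: "y \<in> S j \<Longrightarrow> row y \<in> seg_lines I S L" for y
    unfolding row_def seg_lines_def seg_points_def
    using upd_PiE[OF pP L2d(3)] L1d(3,4) by blast
  have col_seg: "x \<in> S i \<Longrightarrow> col x \<in> seg_lines I S L" for x
    unfolding col_def seg_lines_def seg_points_def
    using upd_PiE[OF pP L1d(3)] L2d(3,4) by blast
  have Prow: "x \<in> l1 \<Longrightarrow> P x y \<in> row y" for x y
    unfolding row_def P_def subst_set_def using ij by (auto simp: fun_upd_twist)
  have Pcol: "y \<in> l2 \<Longrightarrow> P x y \<in> col x" for x y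
    unfolding col_def P_def subst_set_def by auto
  have L1row: "L1 = row y0" unfolding row_def L1p using py0 by auto
  have L2col: "L2 = col x0" unfolding col_def L2p using px0 by auto
  have subH: "l \<in> seg_lines I S L \<Longrightarrow> u \<in> l \<Longrightarrow> v \<in> l \<Longrightarrow> u \<noteq> v \<Longrightarrow> u \<in> H \<Longrightarrow> v \<in> H \<Longrightarrow> l \<subseteq> H"
    for l u v using sub unfolding subspace_def by blast
  have row0: "P x y0 \<notin> H" if xx: "x \<in> l1" "x \<noteq> x0" for x
  proof
    assume h: "P x y0 \<in> H"
    have "p \<noteq> P x y0" using Pp Pinj xx(2) by metis
    moreover have "P x y0 \<in> L1" using Prow[OF xx(1)] L1row by simp
    ultimately have "L1 \<subseteq> H" using subH[OF assms(6) pH(1)] pH(3) h by blast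
    thus False using assms(9) by simp
  qed
  have col0: "P x0 y \<notin> H" if yy: "y \<in> l2" "y \<noteq> y0" for y
  proof
    assume h: "P x0 y \<in> H"
    have "p \<noteq> P x0 y" using Pp Pinj yy(2) by metis
    moreover have "P x0 y \<in> L2" using Pcol[OF yy(1)] L2col by simp
    ultimately have "L2 \<subseteq> H" using subH[OF assms(7) pH(2)] pH(3) h by blast
    thus False using assms(10) by simp
  qed
  have plsj: "partial_linear_space (S j) (L j)" using pls L2d(3) by blast
  obtain u v where uv: "u \<noteq> v" "u \<in> l2" "v \<in> l2"
    using plsj L2d(4) unfolding partial_linear_space_def by meson
  obtain y1 where y1: "y1 \<in> l2" "y1 \<noteq> y0"
    using uv by (cases "u = y0") auto
  have y1S: "y1 \<in> S j" using y1 l2S by auto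
  have x0S: "x0 \<in> S i" using x0 l1S by auto
  have rowH: "u = v" if uv: "u \<in> l1" "v \<in> l1" "P u y1 \<in> H" "P v y1 \<in> H" for u v
  proof (rule ccontr)
    assume ne: "u \<noteq> v"
    have "P u y1 \<noteq> P v y1" using ne Pinj by metis
    hence "row y1 \<subseteq> H"
      using subH[OF row_seg[OF y1S], of "P u y1" "P v y1"] uv Prow by blast
    hence "P x0 y1 \<in> H" using Prow x0(1) by blast
    thus False using col0 y1 by blast
  qed
  obtain r where r: "\<And>x. x \<in> l1 \<Longrightarrow> P x y1 \<in> H \<Longrightarrow> x = r"
  proof (cases "\<exists>x\<in>l1. P x y1 \<in> H")
    case True
    then obtain r where "r \<in> l1" "P r y1 \<in> H" by blast
    thus ?thesis using that rowH by blast
  next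
    case False
    thus ?thesis using that by blast
  qed
  have l4: "infinite l1 \<or> card l1 \<ge> 4" using pls L1d(3,4) by (auto simp: lines_at_least_4_def)
  obtain x1 x2 where xs: "x1 \<in> l1" "x2 \<in> l1" "x1 \<noteq> x2" "x1 \<notin> {x0, r}" "x2 \<notin> {x0, r}"
    using two_more[OF l4] by blast
  have x1S: "x1 \<in> S i" and x2S: "x2 \<in> S i" using xs l1S by auto
  have nH: "P x1 y0 \<notin> H" "P x2 y0 \<notin> H" "P x1 y1 \<notin> H" "P x2 y1 \<notin> H" "P x0 y1 \<notin> H"
    using row0 col0 r xs y1 by auto
  define CL where "CL = compl_lines (seg_lines I S L) H"
  have inCL: "l \<in> seg_lines I S L \<Longrightarrow> z \<in> l \<Longrightarrow> z \<notin> H \<Longrightarrow> l - H \<in> CL" for l z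
    unfolding CL_def compl_lines_def by blast
  define K1 where "K1 = col x1 - H"
  define K2 where "K2 = col x2 - H"
  define M where "M = row y1 - H"
  have K1CL: "K1 \<in> CL" unfolding K1_def using inCL[OF col_seg[OF x1S] Pcol nH(1)] y0 by blast
  have K2CL: "K2 \<in> CL" unfolding K2_def using inCL[OF col_seg[OF x2S] Pcol nH(2)] y0 by blast
  have MCL: "M \<in> CL" unfolding M_def using inCL[OF row_seg[OF y1S] Prow nH(3)] xs by blast
  have L1CL: "L1 - H \<in> CL" using inCL[OF assms(6) _ nH(1)] Prow xs L1row by blast
  have L2CL: "L2 - H \<in> CL" using inCL[OF assms(7) _ nH(5)] Pcol y1 L2col by blast
  have m1: "P x1 y0 \<in> K1" "P x1 y1 \<in> K1" "P x2 y1 \<in> K2" "P x2 y0 \<in> K2"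
    unfolding K1_def K2_def using Pcol y0 y1 nH by auto
  have m2: "P x1 y1 \<in> M" "P x2 y1 \<in> M" unfolding M_def using Prow xs nH by auto
  have m3: "P x1 y0 \<in> L1 - H" "P x2 y0 \<in> L1 - H" using Prow xs nH L1row by auto
  have m4: "P x0 y1 \<in> L2 - H" using Pcol y1 nH L2col by auto
  have nadj: "\<not> pt_adj CL (P u v) (P u' v')" if "u \<noteq> u'" "v \<noteq> v'" for u v u' v'
  proof
    assume "pt_adj CL (P u v) (P u' v')"
    then obtain K where K: "K \<in> CL" "P u v \<in> K" "P u' v' \<in> K" unfolding pt_adj_def by blast
    then obtain l where l: "l \<in> seg_lines I S L" "K = l - H" unfolding CL_def compl_lines_def by blast
    then obtain b k m where "l = subst_set b k m" unfolding seg_lines_def by blast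
    hence lb: "l = subst_set b k m" .
    have "P u v \<in> l" "P u' v' \<in> l" using K(2,3) l(2) by auto
    then obtain s t where st: "P u v = b(k := s)" "P u' v' = b(k := t)"
      using seg_line_mem lb by metis
    have ei: "P u v i = u" "P u' v' i = u'" "P u v j = v" "P u' v' j = v'"
      unfolding P_def using ij by auto
    show False
    proof (cases "k = i")
      case True
      hence "k \<noteq> j" using ij by simp
      thus False using st ei that by (metis fun_upd_other)
    next
      case False
      thus False using st ei that by (metis fun_upd_other)
    qed
  qed
  have dist: "distinct [P x1 y0, P x1 y1, P x2 y1, P x2 y0]"
    using Pinj xs(3) y1(2) by auto
  have ps: "par_star CL K1 K2"
    unfolding par_star_def
  proof (intro conjI K1CL K2CL exI)
    show "distinct [P x1 y0, P x1 y1, P x2 y1, P x2 y0]" by (rule dist)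
    show "pt_adj CL (P x1 y0) (P x1 y1)" unfolding pt_adj_def using K1CL m1 by blast
    show "pt_adj CL (P x1 y1) (P x2 y1)" unfolding pt_adj_def using MCL m2 by blast
    show "pt_adj CL (P x2 y1) (P x2 y0)" unfolding pt_adj_def using K2CL m1 by blast
    show "pt_adj CL (P x2 y0) (P x1 y0)" unfolding pt_adj_def using L1CL m3 by blast
    show "\<not> pt_adj CL (P x1 y0) (P x2 y1)" using nadj xs(3) y1(2) by metis
    show "\<not> pt_adj CL (P x1 y1) (P x2 y0)" using nadj xs(3) y1(2) by metis
  qed (use m1 in auto)
  have disj: "\<not> ln_adj (L1 - H) (L2 - H)"
  proof
    assume "ln_adj (L1 - H) (L2 - H)"
    then obtain z where z: "z \<in> L1" "z \<in> L2" "z \<notin> H" unfolding ln_adj_def by blast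
    obtain u where u: "z = p(i := u)" using seg_line_mem[of z p i l1] z(1) L1p by auto
    obtain v where v: "z = p(j := v)" using seg_line_mem[of z p j l2] z(2) L2p by auto
    have "z i = p i" using v ij by simp
    hence "z = p" using u by simp
    thus False using z pH by simp
  qed
  have a1: "ln_adj M K1" unfolding ln_adj_def using m1(2) m2(1) by blast
  have a2: "ln_adj M K2" unfolding ln_adj_def using m1(3) m2(2) by blast
  have a3: "ln_adj (L1 - H) K1" unfolding ln_adj_def using m1(1) m3(1) by blast
  have a4: "ln_adj (L1 - H) K2" unfolding ln_adj_def using m1(4) m3(2) by blast
  have a5: "ln_adj (L2 - H) M" unfolding ln_adj_def using m2(1) m4 M_def Prow x0(1) nH(5) by blast
  have "line_equiv CL (L1 - H) (L2 - H)"
    unfolding line_equiv_def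
    using L1CL L2CL K1CL K2CL MCL ps a1 a2 a3 a4 a5 disj by blast
  thus ?thesis unfolding CL_def .
qed

end
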